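(* Let $k$ be a field of characteristic $0$ or greater than $d$, $d\ge3$, and $(V,\Theta)$ a regular $d$-linear space over $k$ with center $\mathrm{Cent}_k(\Theta)$ and Lie algebra $\mathcal{L}_\Theta$. For $f\in\mathcal{L}_\Theta$ and $\phi\in\mathrm{Cent}_k(\Theta)$ one has $[f,\phi]=f\phi-\phi f\in\mathrm{Cent}_k(\Theta)$, and $f\cdot\phi:=[f,\phi]$ makes $\mathrm{Cent}_k(\Theta)$ a module over the Lie algebra $\mathcal{L}_\Theta$.
   Context: $(V,\Theta)$: $V$ finite-dimensional $k$-space, $\Theta:V^d\to k$ symmetric $d$-linear, regular meaning $\Theta(w,u_2,\dots,u_d)=0\ \forall u_i\Rightarrow w=0$. $\mathrm{Cent}_k(\Theta)=\{f\in\mathrm{End}_k(V):\Theta(fu_1,u_2,\dots,u_d)=\Theta(u_1,fu_2,\dots,u_d)\ \forall u_i\}$. $\mathcal{L}_\Theta=\{L\in\mathfrak{gl}(V):\sum_{i=1}^d\Theta(u_1,\dots,L(u_i),\dots,u_d)=0\ \forall u_i\}$ with commutator bracket. *)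

theory Defs
  imports Complex_Main "HOL-Combinatorics.Permutations"
begin

text \<open>A d-tuple (u_1,...,u_d) is represented
  by u :: nat \<Rightarrow> 'v, using the entries u 0, ..., u (d-1).
  A d-linear form is Theta :: (nat \<Rightarrow> 'v) \<Rightarrow> 'k depending only on these entries.\<close>

definition multilinear_form ::
  "('k::field \<Rightarrow> 'v::ab_group_add \<Rightarrow> 'v) \<Rightarrow> nat \<Rightarrow> ((nat \<Rightarrow> 'v) \<Rightarrow> 'k) \<Rightarrow> bool" where
  "multilinear_form scale d Theta \<longleftrightarrow>
     (\<forall>u w. (\<forall>i<d. u i = w i) \<longrightarrow> Theta u = Theta w) \<and>
     (\<forall>i<d. \<forall>u x y c. Theta (u(i := scale c x + y)) = c * Theta (u(i := x)) + Theta (u(i := y)))"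

definition symmetric_form :: "nat \<Rightarrow> ((nat \<Rightarrow> 'v) \<Rightarrow> 'k) \<Rightarrow> bool" where
  "symmetric_form d Theta \<longleftrightarrow> (\<forall>p u. p permutes {..<d} \<longrightarrow> Theta (u \<circ> p) = Theta u)"

definition regular_form :: "((nat \<Rightarrow> 'v::zero) \<Rightarrow> 'k::zero) \<Rightarrow> bool" where
  "regular_form Theta \<longleftrightarrow> (\<forall>w. (\<forall>u. Theta (u(0 := w)) = 0) \<longrightarrow> w = 0)"

definition Cent ::
  "('k::field \<Rightarrow> 'v::ab_group_add \<Rightarrow> 'v) \<Rightarrow> ((nat \<Rightarrow> 'v) \<Rightarrow> 'k) \<Rightarrow> ('v \<Rightarrow> 'v) set" where
  "Cent scale Theta = {f. Vector_Spaces.linear scale scale f \<and>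
     (\<forall>u. Theta (u(0 := f (u 0))) = Theta (u(1 := f (u 1))))}"

definition LieTheta ::
  "('k::field \<Rightarrow> 'v::ab_group_add \<Rightarrow> 'v) \<Rightarrow> nat \<Rightarrow> ((nat \<Rightarrow> 'v) \<Rightarrow> 'k) \<Rightarrow> ('v \<Rightarrow> 'v) set" where
  "LieTheta scale d Theta = {L. Vector_Spaces.linear scale scale L \<and>
     (\<forall>u. (\<Sum>i<d. Theta (u(i := L (u i)))) = 0)}"

definition bracket :: "('v::ab_group_add \<Rightarrow> 'v) \<Rightarrow> ('v \<Rightarrow> 'v) \<Rightarrow> ('v \<Rightarrow> 'v)" where
  "bracket f g = (\<lambda>x. f (g x) - g (f x))"

end

theory Submission
  imports Defs
begin


lemma theta_diff:
  assumes vs: "vector_space scale" and ml: "multilinear_form scale d Theta" and i: "i < d"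
  shows "Theta (u(i := x - y)) = Theta (u(i := x)) - Theta (u(i := y))"
proof -
  have "Theta (u(i := scale 1 (x - y) + y)) = 1 * Theta (u(i := x - y)) + Theta (u(i := y))"
    using ml i unfolding multilinear_form_def by blast
  moreover have "scale 1 (x - y) + y = x" using vector_space.vector_space_assms(4)[OF vs] by simp
  ultimately show ?thesis by simp
qed

lemma theta_zero:
  assumes vs: "vector_space scale" and ml: "multilinear_form scale d Theta" and i: "i < d"
  shows "Theta (u(i := 0)) = 0"
  using theta_diff[OF vs ml i, of u 0 0] by simp

lemma theta_comb:
  assumes ml: "multilinear_form scale d Theta" and i: "i < d"
  shows "Theta (u(i := scale c x + y)) = c * Theta (u(i := x)) + Theta (u(i := y))"
  using ml i unfolding multilinear_form_def by blast

lemma comb4: assumes "(a::'a::ab_group_add) + b + S = 0" "a' + b' + S = 0" shows "a - a' = b' - b"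
proof -
  have "a + b + S = a' + b' + S" using assms by simp
  then have "a + b = a' + b'" by simp
  then show ?thesis by (simp add: algebra_simps)
qed

lemma lin_add: "Vector_Spaces.linear s s f \<Longrightarrow> f (x + y) = f x + f y"
  unfolding Vector_Spaces.linear_iff by blast
lemma lin_scale: "Vector_Spaces.linear s s f \<Longrightarrow> f (s c x) = s c (f x)"
  unfolding Vector_Spaces.linear_iff by blast
lemma lin_diff: "Vector_Spaces.linear s s f \<Longrightarrow> f (x - y) = f x - f y"
proof -
  assume l: "Vector_Spaces.linear s s f"
  have "f (x - y) + f y = f x" using lin_add[OF l, of "x - y" y] by simp
  then show ?thesis by (metis add_diff_cancel)
qed

lemma bracket_cent:
  assumes vs: "vector_space scale" and ml: "multilinear_form scale d Theta" and d3: "d \<ge> 3"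
    and f: "f \<in> LieTheta scale d Theta" and p: "\<phi> \<in> Cent scale Theta"
  shows "bracket f \<phi> \<in> Cent scale Theta"
proof -
  have lf: "Vector_Spaces.linear scale scale f" and Lf: "\<And>u. (\<Sum>i<d. Theta (u(i := f (u i)))) = 0"
    using f unfolding LieTheta_def by auto
  have lp: "Vector_Spaces.linear scale scale \<phi>" and Cp: "\<And>u. Theta (u(0 := \<phi> (u 0))) = Theta (u(1 := \<phi> (u 1)))"
    using p unfolding Cent_def by auto
  have lin: "Vector_Spaces.linear scale scale (bracket f \<phi>)"
    unfolding Vector_Spaces.linear_iff bracket_def
  proof (intro conjI allI)
    show "vector_space scale" by (rule vs)
    show "vector_space scale" by (rule vs)
    fix x y
    show "f (\<phi> (x + y)) - \<phi> (f (x + y)) = f (\<phi> x) - \<phi> (f x) + (f (\<phi> y) - \<phi> (f y))"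
      using lin_add[OF lf] lin_add[OF lp] by simp
  next
    fix c x
    show "f (\<phi> (scale c x)) - \<phi> (f (scale c x)) = scale c (f (\<phi> x) - \<phi> (f x))"
      using lin_scale[OF lf] lin_scale[OF lp] module.scale_right_diff_distrib[OF vs[unfolded module_iff_vector_space[symmetric]]]
      by simp
  qed
  have d0: "0 < d" and d1: "1 < d" using d3 by auto
  have key: "Theta (u(0 := bracket f \<phi> (u 0))) = Theta (u(1 := bracket f \<phi> (u 1)))" for u
  proof -
    define S where "S = (\<Sum>i\<in>{2..<d}. Theta ((u(i := f (u i)))(1 := \<phi> (u 1))))"
    have split: "{..<d} = {0,1} \<union> {2..<d}" using d3 by auto
    have sumsplit: "(\<Sum>i<d. g i) = g 0 + g 1 + (\<Sum>i\<in>{2..<d}. g i)" for g :: "nat \<Rightarrow> 'z::comm_monoid_add"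
      unfolding split by (subst sum.union_disjoint) auto
    define v where "v = u(0 := \<phi> (u 0))"
    define w where "w = u(1 := \<phi> (u 1))"
    have A: "Theta (u(0 := f (\<phi> (u 0)))) + Theta (u(1 := \<phi> (f (u 1)))) + S = 0"
    proof -
      have h: "Theta (v(0 := f (v 0))) + Theta (v(1 := f (v 1))) + (\<Sum>i\<in>{2..<d}. Theta (v(i := f (v i)))) = 0"
        using Lf[of v] by (simp only: sumsplit)
      have e1: "Theta (v(0 := f (v 0))) = Theta (u(0 := f (\<phi> (u 0))))" unfolding v_def by simp
      have e2: "Theta (v(1 := f (v 1))) = Theta (u(1 := \<phi> (f (u 1))))"
        using Cp[of "u(1 := f (u 1))"] unfolding v_def by (simp add: fun_upd_twist)
      have e3: "(\<Sum>i\<in>{2..<d}. Theta (v(i := f (v i)))) = S"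
        unfolding S_def
      proof (rule sum.cong)
        fix i assume "i \<in> {2..<d}"
        then have i: "i \<noteq> 0" "i \<noteq> 1" by auto
        show "Theta (v(i := f (v i))) = Theta ((u(i := f (u i)))(1 := \<phi> (u 1)))"
          using Cp[of "u(i := f (u i))"] i unfolding v_def by (simp add: fun_upd_twist)
      qed simp
      show ?thesis using h by (simp only: e1 e2 e3)
    qed
    have B: "Theta (u(0 := \<phi> (f (u 0)))) + Theta (u(1 := f (\<phi> (u 1)))) + S = 0"
    proof -
      have h: "Theta (w(0 := f (w 0))) + Theta (w(1 := f (w 1))) + (\<Sum>i\<in>{2..<d}. Theta (w(i := f (w i)))) = 0"
        using Lf[of w] by (simp only: sumsplit)
      have e1: "Theta (w(1 := f (w 1))) = Theta (u(1 := f (\<phi> (u 1))))" unfolding w_def by simp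
      have e2: "Theta (w(0 := f (w 0))) = Theta (u(0 := \<phi> (f (u 0))))"
        using Cp[of "u(0 := f (u 0))"] unfolding w_def by (simp add: fun_upd_twist)
      have e3: "(\<Sum>i\<in>{2..<d}. Theta (w(i := f (w i)))) = S"
        unfolding S_def
      proof (rule sum.cong)
        fix i assume "i \<in> {2..<d}"
        then have i: "i \<noteq> 0" "i \<noteq> 1" by auto
        show "Theta (w(i := f (w i))) = Theta ((u(i := f (u i)))(1 := \<phi> (u 1)))"
          using i unfolding w_def by (simp add: fun_upd_twist)
      qed simp
      show ?thesis using h by (simp only: e1 e2 e3)
    qed
    have "Theta (u(0 := bracket f \<phi> (u 0))) = Theta (u(0 := f (\<phi> (u 0)))) - Theta (u(0 := \<phi> (f (u 0))))"
      unfolding bracket_def by (rule theta_diff[OF vs ml d0])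
    moreover have "Theta (u(1 := bracket f \<phi> (u 1))) = Theta (u(1 := f (\<phi> (u 1)))) - Theta (u(1 := \<phi> (f (u 1))))"
      unfolding bracket_def by (rule theta_diff[OF vs ml d1])
    ultimately show ?thesis using comb4[OF A B] by simp
  qed
  show ?thesis unfolding Cent_def using lin key by auto
qed

theorem proposition2p14:
  fixes scale :: "'k::field \<Rightarrow> 'v::ab_group_add \<Rightarrow> 'v"
    and B :: "'v set"
    and d :: nat
    and Theta :: "(nat \<Rightarrow> 'v) \<Rightarrow> 'k"
  assumes fd: "finite_dimensional_vector_space scale B"
    and char: "CHAR('k) = 0 \<or> CHAR('k) > d"
    and d3: "d \<ge> 3"
    and ml: "multilinear_form scale d Theta"
    and sym: "symmetric_form d Theta"
    and reg: "regular_form Theta"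
  shows
    \<comment> \<open>the bracket of L_Theta with the center lands in the center\<close>
    "(\<forall>f\<in>LieTheta scale d Theta. \<forall>\<phi>\<in>Cent scale Theta. bracket f \<phi> \<in> Cent scale Theta)
     \<comment> \<open>Cent is a k-subspace of End(V)\<close>
     \<and> (\<lambda>x. 0) \<in> Cent scale Theta
     \<and> (\<forall>\<phi>\<in>Cent scale Theta. \<forall>\<psi>\<in>Cent scale Theta. \<forall>c.
          (\<lambda>x. scale c (\<phi> x) + \<psi> x) \<in> Cent scale Theta)
     \<comment> \<open>the action f . phi = [f, phi] is bilinear\<close>
     \<and> (\<forall>f\<in>LieTheta scale d Theta. \<forall>g\<in>LieTheta scale d Theta. \<forall>\<phi>\<in>Cent scale Theta. \<forall>c.
          bracket (\<lambda>x. scale c (f x) + g x) \<phi> = (\<lambda>x. scale c (bracket f \<phi> x) + bracket g \<phi> x))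
     \<and> (\<forall>f\<in>LieTheta scale d Theta. \<forall>\<phi>\<in>Cent scale Theta. \<forall>\<psi>\<in>Cent scale Theta. \<forall>c.
          bracket f (\<lambda>x. scale c (\<phi> x) + \<psi> x) = (\<lambda>x. scale c (bracket f \<phi> x) + bracket f \<psi> x))
     \<comment> \<open>Lie module axiom: [f,g] . phi = f . (g . phi) - g . (f . phi)\<close>
     \<and> (\<forall>f\<in>LieTheta scale d Theta. \<forall>g\<in>LieTheta scale d Theta. \<forall>\<phi>\<in>Cent scale Theta.
          bracket (bracket f g) \<phi> = (\<lambda>x. bracket f (bracket g \<phi>) x - bracket g (bracket f \<phi>) x))"
proof -
  have vs: "vector_space scale" using fd unfolding finite_dimensional_vector_space_def by blast
  have ms: "module scale" using vs by (simp add: module_iff_vector_space)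
  have d0: "0 < d" and d1: "1 < d" using d3 by auto
  have sd: "\<And>c a b. scale c (a - b) = scale c a - scale c b"
    by (rule module.scale_right_diff_distrib[OF ms])
  have P1: "\<forall>f\<in>LieTheta scale d Theta. \<forall>\<phi>\<in>Cent scale Theta. bracket f \<phi> \<in> Cent scale Theta"
    using bracket_cent[OF vs ml d3] by blast
  have P2: "(\<lambda>x. 0) \<in> Cent scale Theta"
    unfolding Cent_def using theta_zero[OF vs ml d0] theta_zero[OF vs ml d1]
    by (simp add: Vector_Spaces.linear_iff vs module.scale_zero_right[OF ms])
  have P3: "(\<lambda>x. scale c (\<phi> x) + \<psi> x) \<in> Cent scale Theta"
    if p: "\<phi> \<in> Cent scale Theta" and q: "\<psi> \<in> Cent scale Theta" for \<phi> \<psi> c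
  proof -
    have lp: "Vector_Spaces.linear scale scale \<phi>" and Cp: "\<And>u. Theta (u(0 := \<phi> (u 0))) = Theta (u(1 := \<phi> (u 1)))"
      using p unfolding Cent_def by auto
    have lq: "Vector_Spaces.linear scale scale \<psi>" and Cq: "\<And>u. Theta (u(0 := \<psi> (u 0))) = Theta (u(1 := \<psi> (u 1)))"
      using q unfolding Cent_def by auto
    have "Vector_Spaces.linear scale scale (\<lambda>x. scale c (\<phi> x) + \<psi> x)"
      unfolding Vector_Spaces.linear_iff
      using vs lin_add[OF lp] lin_add[OF lq] lin_scale[OF lp] lin_scale[OF lq]
        module.scale_right_distrib[OF ms] module.scale_left_commute[OF ms]
      by (simp add: algebra_simps)
    moreover have "Theta (u(0 := scale c (\<phi> (u 0)) + \<psi> (u 0))) = Theta (u(1 := scale c (\<phi> (u 1)) + \<psi> (u 1)))" for u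
      using theta_comb[OF ml d0] theta_comb[OF ml d1] Cp Cq by simp
    ultimately show ?thesis unfolding Cent_def by simp
  qed
  have P4: "bracket (\<lambda>x. scale c (f x) + g x) \<phi> = (\<lambda>x. scale c (bracket f \<phi> x) + bracket g \<phi> x)"
    if p: "\<phi> \<in> Cent scale Theta" for f g \<phi> c
  proof -
    have lp: "Vector_Spaces.linear scale scale \<phi>" using p unfolding Cent_def by auto
    show ?thesis unfolding bracket_def
      using lin_add[OF lp] lin_scale[OF lp] sd
      by (simp add: sd algebra_simps)
  qed
  have P5: "bracket f (\<lambda>x. scale c (\<phi> x) + \<psi> x) = (\<lambda>x. scale c (bracket f \<phi> x) + bracket f \<psi> x)"
    if f: "f \<in> LieTheta scale d Theta" for f \<phi> \<psi> c
  proof -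
    have lf: "Vector_Spaces.linear scale scale f" using f unfolding LieTheta_def by auto
    show ?thesis unfolding bracket_def
      using lin_add[OF lf] lin_scale[OF lf] sd
      by (simp add: sd algebra_simps)
  qed
  have P6: "bracket (bracket f g) \<phi> = (\<lambda>x. bracket f (bracket g \<phi>) x - bracket g (bracket f \<phi>) x)"
    if f: "f \<in> LieTheta scale d Theta" and g: "g \<in> LieTheta scale d Theta" and p: "\<phi> \<in> Cent scale Theta" for f g \<phi>
  proof -
    have lf: "Vector_Spaces.linear scale scale f" using f unfolding LieTheta_def by auto
    have lg: "Vector_Spaces.linear scale scale g" using g unfolding LieTheta_def by auto
    have lp: "Vector_Spaces.linear scale scale \<phi>" using p unfolding Cent_def by auto
    show ?thesis unfolding bracket_def
      by (simp add: lin_diff[OF lf] lin_diff[OF lg] lin_diff[OF lp] algebra_simps)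
  qed
  show ?thesis using P1 P2 P3 P4 P5 P6 by blast
qed

end
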